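(* Let $p_1,p_2>2$ be distinct primes and $m_2=p_1^{\beta_1}p_2^{\beta_2}$ with $\beta_1,\beta_2$ positive integers. Let $t=\mathrm{ord}_{m_2}(2)$ and let $\gamma\in\mathbb{F}_{2^t}^*$ be a primitive $m_2$th root of unity. Suppose that $m_2$ is good and that $(u,v)=(p_1^{i_1}p_2^{i_2}\sigma_1,\ p_1^{j_1}p_2^{j_2}\sigma_2)$ is a collision for $m_2$, where $i_1,i_2,j_1,j_2$ are nonnegative integers and $\sigma_1,\sigma_2$ are integers coprime to $m_2$. Let $\omega_1=\min\{i_1,j_1\}$ and $\omega_2=\min\{i_2,j_2\}$. Then $m_1:=m_2/(p_1^{\omega_1}p_2^{\omega_2})$ is good.
   Context: For $m=p_1^{\alpha_1}p_2^{\alpha_2}$ with $p_1,p_2>2$ distinct primes and $\alpha_1,\alpha_2\ge1$: $\mathrm{ord}_m(2)$ is the multiplicative order of $2$ modulo $m$, and with $t=\mathrm{ord}_m(2)$ one fixes a primitive $m$th root of unity $\gamma\in\mathbb{F}_{2^t}^*$. The canonical set of $m$ is $S_m=\{s_{01},s_{10},s_{11}\}\subseteq\mathbb{Z}_m$, where for $\sigma=(\sigma_1,\sigma_2)\in\{0,1\}^2\setminus\{(0,0)\}$, $s_\sigma$ is the unique element of $\mathbb{Z}_m$ with $s_\sigma\equiv\sigma_1 \pmod{p_1^{\alpha_1}}$ and $s_\sigma\equiv \sigma_2\pmod{p_2^{\alpha_2}}$. An $S_m$-decoding polynomial is a polynomial $P(X)\in\mathbb{F}_{2^t}[X]$ such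 that $P(\gamma^s)=0$ for every $s\in S_m$ and $P(1)=1$. The number $m$ is called good if there exists an $S_m$-decoding polynomial with fewer than $4$ monomials (nonzero terms). Let $E=\{e\in\mathbb{Z}: p_1^{\alpha_1}\nmid e,\ p_2^{\alpha_2}\nmid e\}$ and $\rho(z_1,z_2)=(1+z_2^{-1})(1+z_1^{-1})^{-1}$. A pair $(u,v)\in E^2$ is a collision for $m$ if $\rho(\gamma^{s_{10}u},\gamma^{s_{01}u})=\rho(\gamma^{s_{10}v},\gamma^{s_{01}v})$ and $u\not\equiv v\pmod m$. *)

theory Defs
  imports "HOL-Number_Theory.Number_Theory" "HOL-Computational_Algebra.Polynomial" "HOL-Library.Cardinality"
begin

(* m = p1^a1 * p2^a2 throughout; q1 = p1^a1, q2 = p2^a2. *)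

definition primitive_root_of_unity :: "'a::field \<Rightarrow> nat \<Rightarrow> bool" where
  "primitive_root_of_unity g m \<longleftrightarrow> 0 < m \<and> g ^ m = 1 \<and> (\<forall>k. 0 < k \<and> k < m \<longrightarrow> g ^ k \<noteq> 1)"

definition canon_elem :: "nat \<Rightarrow> nat \<Rightarrow> nat \<Rightarrow> nat \<Rightarrow> nat \<Rightarrow> nat \<Rightarrow> nat" where
  "canon_elem p1 a1 p2 a2 e1 e2 =
     (THE s. s < p1 ^ a1 * p2 ^ a2 \<and> [s = e1] (mod p1 ^ a1) \<and> [s = e2] (mod p2 ^ a2))"

definition canonical_set :: "nat \<Rightarrow> nat \<Rightarrow> nat \<Rightarrow> nat \<Rightarrow> nat set" where
  "canonical_set p1 a1 p2 a2 =
     {canon_elem p1 a1 p2 a2 0 1, canon_elem p1 a1 p2 a2 1 0, canon_elem p1 a1 p2 a2 1 1}"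

definition decoding_poly :: "'a::field \<Rightarrow> nat set \<Rightarrow> 'a poly \<Rightarrow> bool" where
  "decoding_poly g S P \<longleftrightarrow> (\<forall>s\<in>S. poly P (g ^ s) = 0) \<and> poly P 1 = 1"

definition num_monomials :: "'a::zero poly \<Rightarrow> nat" where
  "num_monomials P = card {i. coeff P i \<noteq> 0}"

(* m = p1^a1 p2^a2 is good, w.r.t. the field 'a (meant to be F_{2^t}) and the primitive root g *)
definition good :: "'a::field \<Rightarrow> nat \<Rightarrow> nat \<Rightarrow> nat \<Rightarrow> nat \<Rightarrow> bool" where
  "good g p1 a1 p2 a2 \<longleftrightarrow>
     (\<exists>P. decoding_poly g (canonical_set p1 a1 p2 a2) P \<and> num_monomials P < 4)"

definition E_set :: "nat \<Rightarrow> nat \<Rightarrow> nat \<Rightarrow> nat \<Rightarrow> int set" where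
  "E_set p1 a1 p2 a2 = {e. \<not> int (p1 ^ a1) dvd e \<and> \<not> int (p2 ^ a2) dvd e}"

definition rho :: "'a::field \<Rightarrow> 'a \<Rightarrow> 'a" where
  "rho z1 z2 = (1 + inverse z2) * inverse (1 + inverse z1)"

definition collision :: "'a::field \<Rightarrow> nat \<Rightarrow> nat \<Rightarrow> nat \<Rightarrow> nat \<Rightarrow> int \<Rightarrow> int \<Rightarrow> bool" where
  "collision g p1 a1 p2 a2 u v \<longleftrightarrow>
     u \<in> E_set p1 a1 p2 a2 \<and> v \<in> E_set p1 a1 p2 a2 \<and>
     (let s10 = int (canon_elem p1 a1 p2 a2 1 0); s01 = int (canon_elem p1 a1 p2 a2 0 1) in
       rho (g powi (s10 * u)) (g powi (s01 * u)) = rho (g powi (s10 * v)) (g powi (s01 * v)))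
     \<and> \<not> [u = v] (mod int (p1 ^ a1 * p2 ^ a2))"

end

theory Submission
  imports Defs "HOL-Library.Z2"
begin


lemma char2_of_card:
  assumes "CARD('a::{field,finite}) = 2 ^ n"
  shows "(1::'a) + 1 = 0"
proof -
  let ?U = "UNIV - {0::'a}"
  have fin: "finite ?U" by simp
  have powU: "x ^ card ?U = 1" if x: "x \<noteq> 0" for x :: 'a
  proof -
    have bij: "bij_betw (\<lambda>y. x * y) ?U ?U"
      unfolding bij_betw_def
    proof (intro conjI)
      show "inj_on ((*) x) ?U" using x by (auto simp: inj_on_def)
      show "(*) x ` ?U = ?U"
      proof
        show "(*) x ` ?U \<subseteq> ?U" using x by auto
        show "?U \<subseteq> (*) x ` ?U"
        proof
          fix z assume "z \<in> ?U"
          then have "z = x * (inverse x * z)" "inverse x * z \<in> ?U" using x by auto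
          then show "z \<in> (*) x ` ?U" by blast
        qed
      qed
    qed
    have "prod (\<lambda>y. y) ?U = prod (\<lambda>y. x * y) ?U"
      using prod.reindex_bij_betw[OF bij, of "\<lambda>y. y"] by simp
    also have "\<dots> = x ^ card ?U * prod (\<lambda>y. y) ?U"
      by (simp add: prod.distrib)
    finally have "1 * prod (\<lambda>y. y) ?U = x ^ card ?U * prod (\<lambda>y. y) ?U" by simp
    moreover have "prod (\<lambda>y. y) ?U \<noteq> 0" by (simp add: prod_zero_iff)
    ultimately show ?thesis by (metis mult_right_cancel)
  qed
  have cU: "card ?U = 2 ^ n - 1" using assms by (simp add: card_Diff_singleton)
  have "n \<noteq> 0"
  proof
    assume "n = 0"
    then have "CARD('a) = 1" using assms by simp
    then obtain z :: 'a where "UNIV = {z}" using card_1_singletonE by blast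
    then have "(0::'a) = 1" by (metis UNIV_I singletonD)
    then show False by simp
  qed
  then have "odd (card ?U)" using cU by (simp add: odd_iff_mod_2_eq_one)
  then have "(-1::'a) ^ card ?U = -1" by simp
  moreover have "(-1::'a) ^ card ?U = 1" by (rule powU) simp
  ultimately have "(-1::'a) = 1" by simp
  then show ?thesis by (metis add.commute eq_neg_iff_add_eq_0 )
qed

lemma canon_elem_props:
  assumes "coprime (p1^a1) (p2^a2)" "p1 ^ a1 \<noteq> 0" "p2 ^ a2 \<noteq> 0"
  shows "canon_elem p1 a1 p2 a2 e1 e2 < p1 ^ a1 * p2 ^ a2 \<and>
         [canon_elem p1 a1 p2 a2 e1 e2 = e1] (mod p1 ^ a1) \<and> [canon_elem p1 a1 p2 a2 e1 e2 = e2] (mod p2 ^ a2)"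
  unfolding canon_elem_def
  by (rule theI') (rule binary_chinese_remainder_unique_nat[OF assms])



lemma alg_core:
  fixes x1 y1 x2 y2 :: "'c::field"
  assumes C: "1 + 1 = (0::'c)"
    and nz: "x1 \<noteq> 0" "x2 \<noteq> 0"
    and ne1: "x1 \<noteq> 1" "y1 \<noteq> 1" "x2 \<noteq> 1" "y2 \<noteq> 1"
    and ne: "x1 \<noteq> x2 \<or> y1 \<noteq> y2"
    and eq: "x1*(y1+1)*y2*(x2+1) = x2*(y2+1)*y1*(x1+1)"
  shows "x1*x2*(y1+y2) + x2*(1+y2) + x1*(1+y1) \<noteq> 0"
    "x1*x2*(y1+y2) + x2*(1+y2)*x1 + x1*(1+y1)*x2 = 0"
    "x1*x2*(y1+y2) + x2*(1+y2)*y1 + x1*(1+y1)*y2 = 0"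
    "x1*x2*(y1+y2) + x2*(1+y2)*(x1*y1) + x1*(1+y1)*(x2*y2) = 0"
proof -
  have C2: "(2::'c) = 0" using C by simp
  have two: "\<And>a::'c. a + a = 0" by (metis C distrib_left mult_1_right mult_zero_right)
  have neg: "\<And>a::'c. - a = a" using two by (metis add_eq_0_iff)
  show "x1*x2*(y1+y2) + x2*(1+y2)*x1 + x1*(1+y1)*x2 = 0"
  proof -
    have "x1*x2*(y1+y2) + x2*(1+y2)*x1 + x1*(1+y1)*x2 = 2 * (x1*x2*(1+y1+y2))"
      by (simp add: algebra_simps)
    then show ?thesis using C2 by simp
  qed
  show "x1*x2*(y1+y2) + x2*(1+y2)*(x1*y1) + x1*(1+y1)*(x2*y2) = 0"
  proof -
    have "x1*x2*(y1+y2) + x2*(1+y2)*(x1*y1) + x1*(1+y1)*(x2*y2) = 2 * (x1*x2*y1 + x1*x2*y2 + x1*x2*y1*y2)"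
      by (simp add: algebra_simps)
    then show ?thesis using C2 by simp
  qed
  show "x1*x2*(y1+y2) + x2*(1+y2)*y1 + x1*(1+y1)*y2 = 0"
  proof -
    have "x1*x2*(y1+y2) + x2*(1+y2)*y1 + x1*(1+y1)*y2 =
       (x1*(y1+1)*y2*(x2+1) - x2*(y2+1)*y1*(x1+1)) + 2 * (x1*x2*y1 + x2*y1 + x2*y1*y2)"
      by (simp add: algebra_simps)
    then show ?thesis using C2 eq by simp
  qed
  show "x1*x2*(y1+y2) + x2*(1+y2) + x1*(1+y1) \<noteq> 0"
  proof
    assume S: "x1*x2*(y1+y2) + x2*(1+y2) + x1*(1+y1) = 0"
    have "x2*(1+y2)*(1+x1) - x1*(1+y1)*(1+x2) = (x1*x2*(y1+y2) + x2*(1+y2) + x1*(1+y1)) - 2*(x1*x2*y1 + x1 + x1*y1)"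
      by (simp add: algebra_simps)
    then have A: "x2*(1+y2)*(1+x1) = x1*(1+y1)*(1+x2)" using S C2 by simp
    have e2: "x1*(1+y1)*(1+x2)*y2 = x2*(1+y2)*(1+x1)*y1" using eq by (simp add: algebra_simps)
    have "x1*(1+y1)*(1+x2) * (y1 - y2) = 0"
    proof -
      have "x1*(1+y1)*(1+x2) * (y1 - y2) = x1*(1+y1)*(1+x2)*y1 - x1*(1+y1)*(1+x2)*y2"
        by (simp add: algebra_simps)
      also have "\<dots> = x2*(1+y2)*(1+x1)*y1 - x1*(1+y1)*(1+x2)*y2" using A by simp
      also have "\<dots> = 0" using e2 by simp
      finally show ?thesis .
    qed
    moreover have "x1*(1+y1)*(1+x2) \<noteq> 0"
      using nz ne1 neg by (metis add_eq_0_iff mult_eq_0_iff add.commute)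
    ultimately have "y1 = y2" by simp
    have "(1+y1) * (x2 - x1) = x2*(1+y2)*(1+x1) - x1*(1+y1)*(1+x2)"
      using \<open>y1 = y2\<close> by (simp add: algebra_simps)
    then have "(1+y1) * (x2 - x1) = 0" using A by simp
    moreover have "1 + y1 \<noteq> 0" using ne1 neg by (metis add_eq_0_iff)
    ultimately have "x1 = x2" by simp
    with \<open>y1 = y2\<close> ne show False by simp
  qed
qed



lemma prim_pos: "primitive_root_of_unity z m \<Longrightarrow> 0 < m"
  by (simp add: primitive_root_of_unity_def)

lemma prim_nz: "primitive_root_of_unity (z::'c::field) m \<Longrightarrow> z \<noteq> 0"
  unfolding primitive_root_of_unity_def by (metis power_0_left zero_neq_one less_not_refl)

lemma prim_pow_mod: assumes "primitive_root_of_unity (z::'c::field) m" shows "z ^ n = z ^ (n mod m)"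
proof -
  have "z ^ n = z ^ (m * (n div m) + n mod m)" by simp
  also have "\<dots> = (z^m)^(n div m) * z^(n mod m)" by (simp only: power_add power_mult)
  also have "\<dots> = z^(n mod m)" using assms by (simp add: primitive_root_of_unity_def)
  finally show ?thesis .
qed

lemma prim_pow_eq1: assumes "primitive_root_of_unity (z::'c::field) m" shows "z ^ n = 1 \<longleftrightarrow> m dvd n"
proof
  assume h: "z ^ n = 1"
  have "z ^ (n mod m) = 1" using h prim_pow_mod[OF assms] by simp
  moreover have "n mod m < m" using prim_pos[OF assms] by simp
  ultimately have "n mod m = 0" using assms unfolding primitive_root_of_unity_def by (metis bot_nat_0.not_eq_extremum)
  then show "m dvd n" by (simp add: dvd_eq_mod_eq_0)
next
  assume "m dvd n" then show "z ^ n = 1" using prim_pow_mod[OF assms, of n] by (simp add: dvd_eq_mod_eq_0)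
qed

lemma prim_pow_cong: assumes "primitive_root_of_unity (z::'c::field) m" shows "z ^ i = z ^ j \<longleftrightarrow> [i = j] (mod m)"
  using prim_pow_mod[OF assms, of i] prim_pow_mod[OF assms, of j]
proof -
  have ij: "z ^ i = z ^ j \<longleftrightarrow> [i = j] (mod m)" if le: "i \<le> j" for i j
  proof -
    have "z ^ j = z ^ i * z ^ (j - i)" using le by (simp add: power_add[symmetric])
    moreover have "z ^ i \<noteq> 0" using prim_nz[OF assms] by simp
    ultimately have "z ^ i = z ^ j \<longleftrightarrow> z ^ (j - i) = 1" by (metis mult_cancel_left1)
    also have "\<dots> \<longleftrightarrow> m dvd (j - i)" by (rule prim_pow_eq1[OF assms])
    also have "\<dots> \<longleftrightarrow> [i = j] (mod m)" using le by (metis cong_altdef_nat cong_sym_eq)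
    finally show ?thesis .
  qed
  show ?thesis
  proof (cases "i \<le> j")
    case True then show ?thesis using ij by blast
  next
    case False then show ?thesis using ij[of j i] by (metis cong_sym_eq nat_le_linear)
  qed
qed

lemma core_good:
  fixes z :: "'c::field"
  assumes C: "(1::'c) + 1 = 0"
    and pr: "prime p1" "prime p2" "p1 \<noteq> p2" "c1 \<ge> 1" "c2 \<ge> 1"
    and prim: "primitive_root_of_unity z (p1^c1 * p2^c2)"
    and na: "\<not> p1^c1 dvd a" "\<not> p2^c2 dvd a" "\<not> p1^c1 dvd b" "\<not> p2^c2 dvd b"
    and ab: "\<not> [a = b] (mod p1^c1 * p2^c2)"
    and eq: "z^(canon_elem p1 c1 p2 c2 1 0*a) * (z^(canon_elem p1 c1 p2 c2 0 1*a) + 1)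
               * z^(canon_elem p1 c1 p2 c2 0 1*b) * (z^(canon_elem p1 c1 p2 c2 1 0*b) + 1) =
             z^(canon_elem p1 c1 p2 c2 1 0*b) * (z^(canon_elem p1 c1 p2 c2 0 1*b) + 1)
               * z^(canon_elem p1 c1 p2 c2 0 1*a) * (z^(canon_elem p1 c1 p2 c2 1 0*a) + 1)"
  shows "good z p1 c1 p2 c2"
proof -
  define q1 where "q1 = p1^c1"
  define q2 where "q2 = p2^c2"
  define m where "m = q1 * q2"
  define s10 where "s10 = canon_elem p1 c1 p2 c2 1 0"
  define s01 where "s01 = canon_elem p1 c1 p2 c2 0 1"
  define s11 where "s11 = canon_elem p1 c1 p2 c2 1 1"
  have cop: "coprime q1 q2" unfolding q1_def q2_def using pr
    by (simp add: primes_coprime)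
  have q1pos: "q1 \<noteq> 0" "q2 \<noteq> 0" using pr unfolding q1_def q2_def by (auto simp: prime_gt_0_nat)
  have q1gt: "q1 > 1" unfolding q1_def using pr
    by (intro one_less_power) (auto dest: prime_gt_1_nat)
  have q2gt: "q2 > 1" unfolding q2_def using pr
    by (intro one_less_power) (auto dest: prime_gt_1_nat)
  note props = canon_elem_props[OF cop[unfolded q1_def q2_def] q1pos[unfolded q1_def q2_def]]
  have s10: "[s10 = 1] (mod q1)" "[s10 = 0] (mod q2)" using props[of 1 0] unfolding s10_def q1_def q2_def by auto
  have s01: "[s01 = 0] (mod q1)" "[s01 = 1] (mod q2)" using props[of 0 1] unfolding s01_def q1_def q2_def by auto
  have s11: "s11 = 1"
  proof -
    have "s11 < m" "[s11 = 1] (mod q1)" "[s11 = 1] (mod q2)" using props[of 1 1] unfolding s11_def q1_def q2_def m_def by auto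
    then have "[s11 = 1] (mod m)" unfolding m_def using cop by (simp add: coprime_cong_mult_nat)
    moreover have "1 < m" unfolding m_def using q1gt q2gt by (simp add: one_less_mult)
    ultimately show ?thesis using \<open>s11 < m\<close> cong_less_imp_eq_nat by blast
  qed
  have cs10: "coprime s10 q1" using s10(1) by (metis cong_imp_coprime cong_sym coprime_1_left)
  have cs01: "coprime s01 q2" using s01(2) by (metis cong_imp_coprime cong_sym coprime_1_left)
  have primm: "primitive_root_of_unity z m" using prim unfolding m_def q1_def q2_def .
  have sum1: "[s10 + s01 = 1] (mod m)"
  proof -
    have "[s10 + s01 = 1 + 0] (mod q1)" using s10 s01 by (intro cong_add) auto
    moreover have "[s10 + s01 = 0 + 1] (mod q2)" using s10 s01 by (intro cong_add) auto
    ultimately show ?thesis unfolding m_def using cop by (simp add: coprime_cong_mult_nat)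
  qed
  define x1 where "x1 = z^(s10*a)"
  define y1 where "y1 = z^(s01*a)"
  define x2 where "x2 = z^(s10*b)"
  define y2 where "y2 = z^(s01*b)"
  have zn: "z \<noteq> 0" using prim_nz[OF primm] .
  have nz: "x1 \<noteq> 0" "x2 \<noteq> 0" using zn unfolding x1_def x2_def by auto
  have ne10: "z^(s10*n) \<noteq> 1" if "\<not> q1 dvd n" for n
  proof
    assume "z^(s10*n) = 1"
    then have "m dvd s10 * n" using prim_pow_eq1[OF primm] by simp
    then have "q1 dvd s10 * n" unfolding m_def by (meson dvd_mult_left)
    then have "q1 dvd n" using cs10 by (metis coprime_commute coprime_dvd_mult_right_iff)
    with that show False by simp
  qed
  have ne01: "z^(s01*n) \<noteq> 1" if "\<not> q2 dvd n" for n
  proof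
    assume "z^(s01*n) = 1"
    then have "m dvd s01 * n" using prim_pow_eq1[OF primm] by simp
    then have "q2 dvd s01 * n" unfolding m_def by (meson dvd_mult_right)
    then have "q2 dvd n" using cs01 by (metis coprime_commute coprime_dvd_mult_right_iff)
    with that show False by simp
  qed
  have ne1: "x1 \<noteq> 1" "y1 \<noteq> 1" "x2 \<noteq> 1" "y2 \<noteq> 1"
    unfolding x1_def y1_def x2_def y2_def using ne10 ne01 na unfolding q1_def q2_def by auto
  have ne: "x1 \<noteq> x2 \<or> y1 \<noteq> y2"
  proof (rule ccontr)
    assume "\<not> (x1 \<noteq> x2 \<or> y1 \<noteq> y2)"
    then have "[s10*a = s10*b] (mod m)" "[s01*a = s01*b] (mod m)"
      unfolding x1_def x2_def y1_def y2_def using prim_pow_cong[OF primm] by auto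
    then have "[s10*a = s10*b] (mod q1)" "[s01*a = s01*b] (mod q2)" unfolding m_def
      using cong_dvd_modulus_nat by (meson dvd_triv_left dvd_triv_right)+
    then have "[a = b] (mod q1)" "[a = b] (mod q2)" using cs10 cs01
      by (simp_all add: cong_mult_lcancel_nat coprime_commute)
    then have "[a = b] (mod m)" unfolding m_def using cop by (simp add: coprime_cong_mult_nat)
    with ab show False unfolding m_def q1_def q2_def by simp
  qed
  have eq': "x1*(y1+1)*y2*(x2+1) = x2*(y2+1)*y1*(x1+1)"
    using eq unfolding x1_def y1_def x2_def y2_def s10_def s01_def .
  note AC = alg_core[OF C nz ne1 ne eq']
  define k1 where "k1 = x2*(1+y2)"
  define k2 where "k2 = x1*(1+y1)"
  define k0 where "k0 = x1*x2*(y1+y2)"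
  define S where "S = k0 + k1 + k2"
  have Snz: "S \<noteq> 0" using AC(1) unfolding S_def k0_def k1_def k2_def .
  define P where "P = smult (inverse S) ([:k0:] + monom k1 a + monom k2 b)"
  have polyP: "poly P w = inverse S * (k0 + k1 * w^a + k2 * w^b)" for w
    unfolding P_def by (simp add: poly_monom)
  have za: "z ^ a = x1 * y1"
  proof -
    have "x1 * y1 = z ^ ((s10 + s01) * a)" unfolding x1_def y1_def by (simp add: power_add add_mult_distrib)
    also have "\<dots> = z ^ (1 * a)" using prim_pow_cong[OF primm] cong_scalar_right[OF sum1, of a] by blast
    finally show ?thesis by simp
  qed
  have dec: "decoding_poly z (canonical_set p1 c1 p2 c2) P"
    unfolding decoding_poly_def canonical_set_def
  proof (intro conjI ballI)
    fix s assume "s \<in> {canon_elem p1 c1 p2 c2 0 1, canon_elem p1 c1 p2 c2 1 0, canon_elem p1 c1 p2 c2 1 1}"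
    then have "s = s01 \<or> s = s10 \<or> s = 1" unfolding s01_def s10_def using s11 s11_def by auto
    then show "poly P (z ^ s) = 0"
    proof (elim disjE)
      assume "s = s01"
      then have "poly P (z^s) = inverse S * (k0 + k1 * y1 + k2 * y2)"
        unfolding polyP y1_def y2_def by (simp add: power_mult)
      then show ?thesis using AC(3) unfolding k0_def k1_def k2_def by simp
    next
      assume "s = s10"
      then have "poly P (z^s) = inverse S * (k0 + k1 * x1 + k2 * x2)"
        unfolding polyP x1_def x2_def by (simp add: power_mult)
      then show ?thesis using AC(2) unfolding k0_def k1_def k2_def by (simp add: mult.commute)
    next
      assume "s = 1"
      have zb: "z ^ b = x2 * y2"
      proof -
        have "x2 * y2 = z ^ ((s10 + s01) * b)" unfolding x2_def y2_def by (simp add: power_add add_mult_distrib)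
        also have "\<dots> = z ^ (1 * b)" using prim_pow_cong[OF primm] cong_scalar_right[OF sum1, of b] by blast
        finally show ?thesis by simp
      qed
      have "poly P (z^s) = inverse S * (k0 + k1 * (x1*y1) + k2 * (x2*y2))"
        unfolding polyP using \<open>s = 1\<close> za zb by simp
      then show ?thesis using AC(4) unfolding k0_def k1_def k2_def by simp
    qed
  next
    show "poly P 1 = 1" unfolding polyP using Snz unfolding S_def by simp
  qed
  have cc: "coeff [:k0:] i = (if i = 0 then k0 else 0)" for i by (cases i) auto
  have "coeff P i = inverse S * ((if i = 0 then k0 else 0) + (if a = i then k1 else 0) + (if b = i then k2 else 0))" for i
    unfolding P_def by (simp add: coeff_monom cc)
  then have "{i. coeff P i \<noteq> 0} \<subseteq> {0, a, b}" by auto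
  then have "num_monomials P \<le> card {0, a, b}" unfolding num_monomials_def
    by (intro card_mono) auto
  also have "\<dots> \<le> 3" by (simp add: card_insert_if)
  finally show ?thesis unfolding good_def using dec by force
qed



definition hb :: "bit \<Rightarrow> 'a::field" where "hb x = (if x = 0 then 0 else 1)"

lemma bit_cases2: "(x::bit) = 0 \<or> x = 1" using bit_not_zero_iff by blast

lemma hb0[simp]: "hb 0 = 0" and hb1[simp]: "hb 1 = 1" by (simp_all add: hb_def)

lemma hb_nz: "x \<noteq> 0 \<Longrightarrow> hb x \<noteq> (0::'a::field)" by (simp add: hb_def)

lemma bit_11: "(1::bit) + 1 = 0" by (metis one_add_one bit_2_eq_0)

lemma hb_add: assumes C: "(1::'a::field) + 1 = 0" shows "(hb (x + y) :: 'a) = hb x + hb y"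
proof -
  consider "x = 0" | "x = 1 \<and> y = 0" | "x = 1 \<and> y = 1" using bit_cases2[of x] bit_cases2[of y] by blast
  then show ?thesis
  proof cases
    case 1 then show ?thesis by simp
  next
    case 2 then show ?thesis by simp
  next
    case 3 then show ?thesis using C by (simp only: bit_11 hb0 hb1)
  qed
qed


lemma hb_mult: "(hb (x * y) :: 'a::field) = hb x * hb y"
proof -
  consider "x = 0" | "x = 1" using bit_cases2[of x] by blast
  then show ?thesis by cases simp_all
qed

lemma hb_uminus: assumes C: "(1::'a::field) + 1 = 0" shows "(hb (- x) :: 'a) = - hb x"
proof -
  have m1: "(-1::'a) = 1" using C by (metis add_eq_0_iff)
  have mb: "(-1::bit) = 1" by (metis add_eq_0_iff bit_11)
  consider "x = 0" | "x = 1" using bit_cases2[of x] by blast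
  then show ?thesis
  proof cases
    case 1 then show ?thesis by simp
  next
    case 2 then show ?thesis using m1 mb by (simp only: hb1)
  qed
qed

lemma hb_diff: assumes C: "(1::'a::field) + 1 = 0" shows "(hb (x - y) :: 'a) = hb x - hb y"
  by (simp only: diff_conv_add_uminus hb_add[OF C] hb_uminus[OF C])

lemma mp_add: assumes C: "(1::'a::field) + 1 = 0"
  shows "map_poly (hb :: bit \<Rightarrow> 'a) (p + q) = map_poly hb p + map_poly hb q"
  by (rule poly_eqI) (simp only: coeff_map_poly hb0 coeff_add hb_add[OF C])

lemma mp_diff: assumes C: "(1::'a::field) + 1 = 0"
  shows "map_poly (hb :: bit \<Rightarrow> 'a) (p - q) = map_poly hb p - map_poly hb q"
  by (rule poly_eqI) (simp only: coeff_map_poly hb0 coeff_diff hb_diff[OF C])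

lemma mp_mult: assumes C: "(1::'a::field) + 1 = 0"
  shows "map_poly (hb :: bit \<Rightarrow> 'a) (p * q) = map_poly hb p * map_poly hb q"
proof (induction p)
  case 0 then show ?case by simp
next
  case (pCons a p)
  have "map_poly (hb :: bit \<Rightarrow> 'a) (pCons a p * q) = map_poly hb (smult a q) + map_poly hb (pCons 0 (p * q))"
    by (simp only: mult_pCons_left mp_add[OF C])
  also have "\<dots> = smult (hb a) (map_poly hb q) + pCons 0 (map_poly hb p * map_poly hb q)"
    by (simp add: map_poly_smult hb_mult map_poly_pCons pCons.IH)
  also have "\<dots> = map_poly hb (pCons a p) * map_poly hb q"
    by (simp add: map_poly_pCons)
  finally show ?case .
qed

lemma mp_monom: "map_poly (hb :: bit \<Rightarrow> 'a::field) (monom 1 n) = monom 1 n"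
  by (simp add: map_poly_monom)

lemma mp_one: "map_poly (hb :: bit \<Rightarrow> 'a::field) 1 = 1"
  by simp

lemma mp_degree: "degree (map_poly (hb :: bit \<Rightarrow> 'a::field) p) = degree p"
  by (rule degree_map_poly) (simp add: hb_nz)

lemma mp_eq0: "map_poly (hb :: bit \<Rightarrow> 'a::field) p = 0 \<longleftrightarrow> p = 0"
  by (rule map_poly_eq_0_iff) (auto simp: hb_nz)

lemma mp_dvd: assumes C: "(1::'a::field) + 1 = 0"
  shows "f dvd g \<Longrightarrow> map_poly (hb :: bit \<Rightarrow> 'a) f dvd map_poly hb g"
  by (auto simp: mp_mult[OF C] elim!: dvdE)



lemma ev_xn1: assumes C: "(1::'a::field) + 1 = 0"
  shows "poly (map_poly (hb :: bit \<Rightarrow> 'a) (monom 1 n - 1)) x = x^n - 1"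
  by (simp add: mp_diff[OF C] mp_monom poly_monom)

lemma ev_mult: assumes C: "(1::'a::field) + 1 = 0"
  shows "poly (map_poly (hb :: bit \<Rightarrow> 'a) (p * q)) x = poly (map_poly hb p) x * poly (map_poly hb q) x"
  by (simp add: mp_mult[OF C])

lemma ev_add: assumes C: "(1::'a::field) + 1 = 0"
  shows "poly (map_poly (hb :: bit \<Rightarrow> 'a) (p + q)) x = poly (map_poly hb p) x + poly (map_poly hb q) x"
  by (simp add: mp_add[OF C])

lemma bitpoly_deg0: assumes "degree (g::bit poly) = 0" "g \<noteq> 0" shows "g = 1"
proof -
  have "g = [:coeff g 0:]" using assms(1) by (metis degree_0_id)
  moreover have "coeff g 0 \<noteq> 0" using assms by (metis calculation pCons_0_0)
  then have "coeff g 0 = 1" using bit_cases2 by blast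
  ultimately show ?thesis by (simp add: one_pCons)
qed

lemma xn1_nz: assumes "0 < n" shows "(monom 1 n - 1 :: bit poly) \<noteq> 0"
proof
  assume "(monom 1 n - 1 :: bit poly) = 0"
  then have "coeff (monom 1 n - 1 :: bit poly) n = 0" by simp
  then show False using assms by (simp add: coeff_monom)
qed

lemma xn1_deg: assumes "0 < n" shows "degree (monom 1 n - 1 :: bit poly) = n"
proof (rule antisym)
  have "degree (monom 1 n - 1 :: bit poly) \<le> max (degree (monom 1 n :: bit poly)) (degree (1::bit poly))"
    by (rule degree_diff_le_max)
  then show "degree (monom 1 n - 1 :: bit poly) \<le> n" by (simp add: degree_monom_eq)
  have "coeff (monom 1 n - 1 :: bit poly) n \<noteq> 0" using assms by (simp add: coeff_monom)
  then show "n \<le> degree (monom 1 n - 1 :: bit poly)" by (rule le_degree)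
qed


lemma bezout_min:
  fixes f K :: "bit poly"
  assumes "f \<noteq> 0"
  shows "\<exists>A B. A*f + B*K \<noteq> 0 \<and> (A*f + B*K) dvd f \<and> (A*f + B*K) dvd K"
proof -
  define Q where "Q = (\<lambda>n. \<exists>A B. A*f + B*K \<noteq> 0 \<and> degree (A*f + B*K) = n)"
  have "Q (degree f)" unfolding Q_def using assms by (intro exI[of _ 1] exI[of _ 0]) simp
  then have "Q (LEAST n. Q n)" by (rule LeastI)
  then obtain A B where AB: "A*f + B*K \<noteq> 0" "degree (A*f + B*K) = (LEAST n. Q n)" unfolding Q_def by blast
  define d where "d = A*f + B*K"
  have dmin: "degree d \<le> degree (A'*f + B'*K)" if "A'*f + B'*K \<noteq> 0" for A' B'
    unfolding d_def AB(2) using that by (intro Least_le) (auto simp: Q_def)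
  have dvd: "d dvd g" if "g = A1*f + B1*K" for g A1 B1
  proof -
    have gm: "g mod d = (A1 - (g div d)*A)*f + (B1 - (g div d)*B)*K"
    proof -
      have "g mod d = g - (g div d) * d" by (simp only: minus_div_mult_eq_mod)
      also have "\<dots> = (A1 - (g div d)*A)*f + (B1 - (g div d)*B)*K"
        unfolding that d_def by (simp only: ring_distribs diff_add_eq diff_diff_eq add.assoc mult.assoc) (simp only: algebra_simps)
      finally show ?thesis .
    qed
    have dnz: "d \<noteq> 0" using AB(1) d_def by simp
    have "g mod d = 0"
    proof (rule ccontr)
      assume nz: "g mod d \<noteq> 0"
      have lt: "degree (g mod d) < degree d" using degree_mod_less'[OF dnz nz] .
      have nz': "(A1 - (g div d)*A)*f + (B1 - (g div d)*B)*K \<noteq> 0" using nz unfolding gm .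
      have "degree d \<le> degree ((A1 - (g div d)*A)*f + (B1 - (g div d)*B)*K)" using dmin[OF nz'] .
      then have "degree d \<le> degree (g mod d)" unfolding gm .
      with lt show False by simp
    qed
    then show ?thesis by (simp add: mod_eq_0_iff_dvd)
  qed
  have "d dvd f" by (rule dvd[of f 1 0]) simp
  moreover have "d dvd K" by (rule dvd[of K 0 1]) simp
  ultimately show ?thesis using AB(1) unfolding d_def by blast
qed



lemma transfer:
  fixes eta :: "'a::field" and delta :: "'b::field" and G :: "bit poly"
  assumes Ca: "(1::'a) + 1 = 0" and Cb: "(1::'b) + 1 = 0"
    and pe: "primitive_root_of_unity eta m" and pd: "primitive_root_of_unity delta m"
    and G: "poly (map_poly (hb :: bit \<Rightarrow> 'a) G) eta = 0"
  shows "\<exists>j. coprime j m \<and> poly (map_poly (hb :: bit \<Rightarrow> 'b) G) (delta ^ j) = 0"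
proof -
  have m0: "0 < m" using prim_pos[OF pe] .
  define M :: "bit poly" where "M = monom 1 m - 1"
  have Mnz: "M \<noteq> 0" unfolding M_def using xn1_nz[OF m0] .
  have Mdeg: "degree M = m" unfolding M_def using xn1_deg[OF m0] .
  have evMa: "poly (map_poly (hb :: bit \<Rightarrow> 'a) M) eta = 0"
    unfolding M_def ev_xn1[OF Ca] using pe by (simp add: primitive_root_of_unity_def)
  define Pn where "Pn = (\<lambda>n. \<exists>g::bit poly. g \<noteq> 0 \<and> poly (map_poly (hb :: bit \<Rightarrow> 'a) g) eta = 0 \<and> degree g = n)"
  have "Pn (degree M)" unfolding Pn_def using Mnz evMa by blast
  then have "Pn (LEAST n. Pn n)" by (rule LeastI)
  then obtain f where f: "f \<noteq> 0" "poly (map_poly (hb :: bit \<Rightarrow> 'a) f) eta = 0" "degree f = (LEAST n. Pn n)"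
    unfolding Pn_def by blast
  have fmin: "degree f \<le> degree g" if "g \<noteq> 0" "poly (map_poly (hb :: bit \<Rightarrow> 'a) g) eta = 0" for g
    unfolding f(3) using that by (intro Least_le) (auto simp: Pn_def)
  have fdvd: "f dvd g" if g: "poly (map_poly (hb :: bit \<Rightarrow> 'a) g) eta = 0" for g
  proof -
    define r where "r = g mod f"
    have "g = g div f * f + r" unfolding r_def by simp
    moreover have "poly (map_poly (hb :: bit \<Rightarrow> 'a) (g div f * f + r)) eta =
       poly (map_poly (hb :: bit \<Rightarrow> 'a) (g div f)) eta * poly (map_poly (hb :: bit \<Rightarrow> 'a) f) eta + poly (map_poly (hb :: bit \<Rightarrow> 'a) r) eta"
      by (simp only: ev_add[OF Ca] ev_mult[OF Ca])
    ultimately have "poly (map_poly (hb :: bit \<Rightarrow> 'a) g) eta =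
       poly (map_poly (hb :: bit \<Rightarrow> 'a) (g div f)) eta * poly (map_poly (hb :: bit \<Rightarrow> 'a) f) eta + poly (map_poly (hb :: bit \<Rightarrow> 'a) r) eta"
      by simp
    then have r0: "poly (map_poly (hb :: bit \<Rightarrow> 'a) r) eta = 0" using g f(2) by simp
    have "r = 0"
    proof (rule ccontr)
      assume "r \<noteq> 0"
      then have "degree r < degree f" unfolding r_def using f(1) by (simp add: degree_mod_less')
      moreover have "degree f \<le> degree r" using fmin[OF \<open>r \<noteq> 0\<close> r0] .
      ultimately show False by simp
    qed
    then show ?thesis unfolding r_def by (simp add: mod_eq_0_iff_dvd)
  qed
  have fdeg: "degree f \<ge> 1"
  proof (rule ccontr)
    assume "\<not> degree f \<ge> 1"
    then have "f = 1" using bitpoly_deg0 f(1) by simp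
    then show False using f(2) by simp
  qed
  define R where "R = (\<lambda>j. delta ^ j) ` {..<m}"
  have injR: "inj_on (\<lambda>j. delta ^ j) {..<m}"
  proof (rule inj_onI)
    fix i j assume "i \<in> {..<m}" "j \<in> {..<m}" "delta ^ i = delta ^ j"
    then have "[i = j] (mod m)" "i < m" "j < m" using prim_pow_cong[OF pd] by auto
    then show "i = j" using cong_less_imp_eq_nat by blast
  qed
  have cardR: "card R = m" unfolding R_def using card_image[OF injR] by simp
  have evMb: "poly (map_poly (hb :: bit \<Rightarrow> 'b) M) x = x ^ m - 1" for x
    unfolding M_def ev_xn1[OF Cb] ..
  have mapMb_nz: "map_poly (hb :: bit \<Rightarrow> 'b) M \<noteq> 0" using Mnz mp_eq0 by blast
  have roots_fin: "finite {x. poly (map_poly (hb :: bit \<Rightarrow> 'b) M) x = 0}"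
    using poly_roots_finite[OF mapMb_nz] .
  have roots_card: "card {x. poly (map_poly (hb :: bit \<Rightarrow> 'b) M) x = 0} \<le> m"
  proof -
    have "card {x. poly (map_poly (hb :: bit \<Rightarrow> 'b) M) x = 0} \<le> degree (map_poly (hb :: bit \<Rightarrow> 'b) M)"
      by (rule card_poly_roots_bound[OF mapMb_nz])
    also have "\<dots> = m" using Mdeg by (simp only: mp_degree)
    finally show ?thesis .
  qed
  have RsubM: "R \<subseteq> {x. poly (map_poly (hb :: bit \<Rightarrow> 'b) M) x = 0}"
  proof
    fix x assume "x \<in> R"
    then obtain j where "x = delta ^ j" unfolding R_def by blast
    then have "x ^ m = (delta ^ m) ^ j" by (simp add: power_mult[symmetric] mult.commute)
    then have "x ^ m = 1" using pd by (simp add: primitive_root_of_unity_def)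
    then show "x \<in> {x. poly (map_poly (hb :: bit \<Rightarrow> 'b) M) x = 0}" using evMb by simp
  qed
  have Req: "R = {x. poly (map_poly (hb :: bit \<Rightarrow> 'b) M) x = 0}"
  proof (rule card_subset_eq[OF roots_fin RsubM])
    have "card R \<le> card {x. poly (map_poly (hb :: bit \<Rightarrow> 'b) M) x = 0}" by (rule card_mono[OF roots_fin RsubM])
    then show "card R = card {x. poly (map_poly (hb :: bit \<Rightarrow> 'b) M) x = 0}" using roots_card cardR by simp
  qed
  obtain q where q: "M = f * q" using fdvd[OF evMa] by (elim dvdE)
  have qnz: "q \<noteq> 0" using Mnz q by auto
  have degfq: "m = degree f + degree q" using Mdeg unfolding q by (simp add: degree_mult_eq f(1) qnz)
  obtain rho where rho: "poly (map_poly (hb :: bit \<Rightarrow> 'b) f) rho = 0"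
  proof (rule ccontr)
    assume nr: "\<not> thesis"
    have "R \<subseteq> {x. poly (map_poly (hb :: bit \<Rightarrow> 'b) q) x = 0}"
    proof
      fix x assume "x \<in> R"
      then have "poly (map_poly (hb :: bit \<Rightarrow> 'b) M) x = 0" using RsubM by blast
      then have "poly (map_poly (hb :: bit \<Rightarrow> 'b) f) x * poly (map_poly (hb :: bit \<Rightarrow> 'b) q) x = 0"
        unfolding q ev_mult[OF Cb] .
      moreover have "poly (map_poly (hb :: bit \<Rightarrow> 'b) f) x \<noteq> 0" using nr that by blast
      ultimately show "x \<in> {x. poly (map_poly (hb :: bit \<Rightarrow> 'b) q) x = 0}" by simp
    qed
    moreover have mq: "map_poly (hb :: bit \<Rightarrow> 'b) q \<noteq> 0" using qnz mp_eq0 by blast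
    ultimately have "card R \<le> card {x. poly (map_poly (hb :: bit \<Rightarrow> 'b) q) x = 0}"
      by (intro card_mono poly_roots_finite)
    also have "\<dots> \<le> degree (map_poly (hb :: bit \<Rightarrow> 'b) q)" by (rule card_poly_roots_bound[OF mq])
    also have "\<dots> = degree q" by (rule mp_degree)
    finally show False using cardR degfq fdeg by simp
  qed
  have "poly (map_poly (hb :: bit \<Rightarrow> 'b) M) rho = 0" unfolding q ev_mult[OF Cb] rho by simp
  then have "rho \<in> R" using Req by blast
  then obtain j where j: "j < m" "rho = delta ^ j" unfolding R_def by blast
  have rho_prim: "rho ^ k \<noteq> 1" if k: "0 < k" "k < m" for k
  proof
    assume rk: "rho ^ k = 1"
    define K :: "bit poly" where "K = monom 1 k - 1"
    have evKa: "poly (map_poly (hb :: bit \<Rightarrow> 'a) K) eta \<noteq> 0"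
      unfolding K_def ev_xn1[OF Ca] using pe k by (simp add: primitive_root_of_unity_def)
    obtain A B where AB: "A*f + B*K \<noteq> 0" "(A*f + B*K) dvd f" "(A*f + B*K) dvd K"
      using bezout_min[OF f(1)] by blast
    define g where "g = A*f + B*K"
    obtain e where e: "f = g * e" using AB(2) unfolding g_def by (elim dvdE)
    have gK: "g dvd K" unfolding g_def using AB(3) .
    have evg: "poly (map_poly (hb :: bit \<Rightarrow> 'a) g) eta \<noteq> 0"
    proof
      assume "poly (map_poly (hb :: bit \<Rightarrow> 'a) g) eta = 0"
      moreover obtain h where "K = g * h" using gK by (elim dvdE)
      ultimately have "poly (map_poly (hb :: bit \<Rightarrow> 'a) K) eta = 0" by (simp add: ev_mult[OF Ca])
      with evKa show False by simp
    qed
    have "poly (map_poly (hb :: bit \<Rightarrow> 'a) g) eta * poly (map_poly (hb :: bit \<Rightarrow> 'a) e) eta = 0"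
      using f(2) unfolding e ev_mult[OF Ca] .
    then have eve: "poly (map_poly (hb :: bit \<Rightarrow> 'a) e) eta = 0" using evg by simp
    have gnz: "g \<noteq> 0" "e \<noteq> 0" using e f(1) by auto
    have "degree f \<le> degree e" using fmin[OF gnz(2) eve] .
    moreover have "degree f = degree g + degree e" unfolding e using gnz by (simp add: degree_mult_eq)
    ultimately have "degree g = 0" by simp
    then have g1: "g = 1" using bitpoly_deg0 gnz(1) by simp
    have bz: "A * f + B * K = 1" using g1 unfolding g_def .
    have "poly (map_poly (hb :: bit \<Rightarrow> 'b) (A * f + B * K)) rho = 1"
      unfolding bz by simp
    moreover have "poly (map_poly (hb :: bit \<Rightarrow> 'b) K) rho = 0"
      unfolding K_def ev_xn1[OF Cb] using rk by simp
    ultimately show False unfolding ev_add[OF Cb] ev_mult[OF Cb] using rho by simp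
  qed
  have cj: "coprime j m"
  proof (rule ccontr)
    assume nc: "\<not> coprime j m"
    define g where "g = gcd j m"
    have g1: "g \<noteq> 1" using nc gcd_eq_1_imp_coprime unfolding g_def by blast
    have gpos: "g > 0" unfolding g_def using m0 by simp
    have g2: "g \<ge> 2" using g1 gpos by simp
    have "g dvd m" unfolding g_def by (rule gcd_dvd2)
    then obtain k where mk: "m = g * k" by (elim dvdE)
    have "g dvd j" unfolding g_def by (rule gcd_dvd1)
    then obtain j' where jj: "j = g * j'" by (elim dvdE)
    have k0: "0 < k"
    proof (rule ccontr)
      assume "\<not> 0 < k"
      then have "k = 0" by simp
      then have "m = 0" using mk by simp
      with m0 show False by simp
    qed
    have "2 * k \<le> g * k" using g2 by simp
    then have km: "k < m" using mk k0 by linarith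
    have jk: "j * k = m * j'" by (simp add: jj mk mult_ac)
    have "rho ^ k = delta ^ (j * k)" unfolding j(2) by (rule power_mult[symmetric])
    also have "\<dots> = (delta ^ m) ^ j'" unfolding jk by (rule power_mult)
    also have "\<dots> = 1" using pd by (simp add: primitive_root_of_unity_def)
    finally have "rho ^ k = 1" .
    with rho_prim[OF k0 km] show False by simp
  qed
  have "map_poly (hb :: bit \<Rightarrow> 'b) f dvd map_poly hb G" using mp_dvd[OF Cb fdvd[OF G]] .
  then obtain H where H: "map_poly (hb :: bit \<Rightarrow> 'b) G = map_poly hb f * H" by (elim dvdE)
  have "poly (map_poly (hb :: bit \<Rightarrow> 'b) G) rho = 0" unfolding H poly_mult rho by simp
  then show ?thesis using cj j(2) by blast
qed



lemma powi_mod: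
  fixes z :: "'c::field"
  assumes "z ^ m = 1" "0 < m"
  shows "z powi n = z ^ nat (n mod int m)"
proof -
  have z0: "z \<noteq> 0" using assms by (metis power_0_left zero_neq_one less_not_refl)
  have "z powi n = z powi (int m * (n div int m) + n mod int m)" by simp
  also have "\<dots> = z powi (int m * (n div int m)) * z powi (n mod int m)"
    using z0 by (rule power_int_add[OF disjI1])
  also have "z powi (int m * (n div int m)) = (z powi int m) powi (n div int m)"
    by (rule power_int_mult)
  also have "\<dots> = 1" using assms(1) by simp
  also have "z powi (n mod int m) = z powi int (nat (n mod int m))"
    using assms(2) by simp
  also have "\<dots> = z ^ nat (n mod int m)" by (rule power_int_of_nat)
  finally show ?thesis by simp
qed

lemma powi_cong:
  fixes z :: "'c::field"
  assumes "z ^ m = 1" "0 < m" "[n1 = n2] (mod int m)"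
  shows "z powi n1 = z powi n2"
  using powi_mod[OF assms(1,2), of n1] powi_mod[OF assms(1,2), of n2] assms(3)
  by (simp add: cong_def)

lemma expo_cong:
  fixes s s' a d m1 :: nat and u u0 :: int
  assumes "[int s' = int s] (mod int m1)" "[int a = u0] (mod int m1)" "u = int d * u0"
  shows "[int s' * u = int (d * (s * a))] (mod int (d * m1))"
proof -
  have "[int s' * u0 = int s * int a] (mod int m1)"
    using assms(1) cong_sym[OF assms(2)] by (rule cong_mult)
  then have "int m1 dvd (int s' * u0 - int s * int a)" by (simp add: cong_iff_dvd_diff)
  then have "int d * int m1 dvd int d * (int s' * u0 - int s * int a)" by (rule mult_dvd_mono[OF dvd_refl])
  moreover have "int d * (int s' * u0 - int s * int a) = int s' * u - int (d * (s * a))"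
    using assms(3) by (simp add: algebra_simps)
  ultimately show ?thesis by (simp add: cong_iff_dvd_diff)
qed

lemma na_lemma:
  fixes p d q m1 a :: nat and u u0 :: int
  assumes "\<not> int P dvd u" "u = int d * u0" "D dvd d" "P = D * q" "q dvd m1" "[int a = u0] (mod int m1)"
  shows "\<not> q dvd a"
proof
  assume "q dvd a"
  then have "int q dvd int a" by simp
  moreover have "[int a = u0] (mod int q)" using assms(6) assms(5) by (metis cong_dvd_modulus of_nat_dvd_iff)
  ultimately have "int q dvd u0" using cong_dvd_iff by blast
  then have "int D * int q dvd int d * u0" using assms(3) by (intro mult_dvd_mono) simp_all
  then have "int P dvd u" using assms(2,4) by simp
  with assms(1) show False by simp
qed

lemma rho_eq_poly:
  fixes x1 y1 x2 y2 :: "'c::field"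
  assumes C: "(1::'c) + 1 = 0"
    and nz: "x1 \<noteq> 0" "y1 \<noteq> 0" "x2 \<noteq> 0" "y2 \<noteq> 0"
    and ne1: "x1 \<noteq> 1" "x2 \<noteq> 1"
    and eq: "rho x1 y1 = rho x2 y2"
  shows "x1*(y1+1)*y2*(x2+1) = x2*(y2+1)*y1*(x1+1)"
proof -
  have neg: "\<And>a::'c. - a = a" using C by (metis add_eq_0_iff distrib_left mult_1_right mult_zero_right)
  have p1: "x1 + 1 \<noteq> 0" "x2 + 1 \<noteq> 0" using ne1 neg by (metis add_eq_0_iff)+
  have r: "rho x y = (y + 1) * x / (y * (x + 1))" if "x \<noteq> 0" "y \<noteq> 0" "x + 1 \<noteq> 0" for x y :: 'c
    unfolding rho_def using that by (simp add: field_simps)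
  have "(y1 + 1) * x1 / (y1 * (x1 + 1)) = (y2 + 1) * x2 / (y2 * (x2 + 1))"
    using eq r[OF nz(1,2) p1(1)] r[OF nz(3,4) p1(2)] by simp
  then have "(y1 + 1) * x1 * (y2 * (x2 + 1)) = (y2 + 1) * x2 * (y1 * (x1 + 1))"
    using nz p1 by (simp add: divide_eq_eq eq_divide_eq)
  then show ?thesis by (simp add: algebra_simps)
qed

lemma pow_ne1_10:
  fixes z :: "'c::field"
  assumes pr: "prime p1" "prime p2" "p1 \<noteq> p2"
    and prim: "primitive_root_of_unity z (p1^c1 * p2^c2)"
    and na: "\<not> p1^c1 dvd a"
  shows "z ^ (canon_elem p1 c1 p2 c2 1 0 * a) \<noteq> 1"
proof
  assume h: "z ^ (canon_elem p1 c1 p2 c2 1 0 * a) = 1"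
  have cop: "coprime (p1^c1) (p2^c2)" using pr by (simp add: primes_coprime)
  have nz: "p1^c1 \<noteq> 0" "p2^c2 \<noteq> 0" using pr by (auto simp: prime_gt_0_nat)
  have "[canon_elem p1 c1 p2 c2 1 0 = 1] (mod p1^c1)" using canon_elem_props[OF cop nz] by blast
  then have cs: "coprime (canon_elem p1 c1 p2 c2 1 0) (p1^c1)" by (metis cong_imp_coprime cong_sym coprime_1_left)
  have "p1^c1 * p2^c2 dvd canon_elem p1 c1 p2 c2 1 0 * a" using h prim_pow_eq1[OF prim] by simp
  then have "p1^c1 dvd canon_elem p1 c1 p2 c2 1 0 * a" by (meson dvd_mult_left)
  then have "p1^c1 dvd a" using cs by (metis coprime_commute coprime_dvd_mult_right_iff)
  with na show False by simp
qed

lemma pow_ne1_01: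
  fixes z :: "'c::field"
  assumes pr: "prime p1" "prime p2" "p1 \<noteq> p2"
    and prim: "primitive_root_of_unity z (p1^c1 * p2^c2)"
    and na: "\<not> p2^c2 dvd a"
  shows "z ^ (canon_elem p1 c1 p2 c2 0 1 * a) \<noteq> 1"
proof
  assume h: "z ^ (canon_elem p1 c1 p2 c2 0 1 * a) = 1"
  have cop: "coprime (p1^c1) (p2^c2)" using pr by (simp add: primes_coprime)
  have nz: "p1^c1 \<noteq> 0" "p2^c2 \<noteq> 0" using pr by (auto simp: prime_gt_0_nat)
  have "[canon_elem p1 c1 p2 c2 0 1 = 1] (mod p2^c2)" using canon_elem_props[OF cop nz] by blast
  then have cs: "coprime (canon_elem p1 c1 p2 c2 0 1) (p2^c2)" by (metis cong_imp_coprime cong_sym coprime_1_left)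
  have "p1^c1 * p2^c2 dvd canon_elem p1 c1 p2 c2 0 1 * a" using h prim_pow_eq1[OF prim] by simp
  then have "p2^c2 dvd canon_elem p1 c1 p2 c2 0 1 * a" by (meson dvd_mult_right)
  then have "p2^c2 dvd a" using cs by (metis coprime_commute coprime_dvd_mult_right_iff)
  with na show False by simp
qed

definition GG :: "nat \<Rightarrow> nat \<Rightarrow> nat \<Rightarrow> nat \<Rightarrow> bit poly" where
  "GG A1 B1 A2 B2 = monom 1 A1 * (monom 1 B1 + 1) * monom 1 B2 * (monom 1 A2 + 1)
                   - monom 1 A2 * (monom 1 B2 + 1) * monom 1 B1 * (monom 1 A1 + 1)"

lemma ev_GG:
  assumes C: "(1::'c::field) + 1 = 0"
  shows "poly (map_poly (hb :: bit \<Rightarrow> 'c) (GG A1 B1 A2 B2)) x =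
    x^A1*(x^B1+1)*x^B2*(x^A2+1) - x^A2*(x^B2+1)*x^B1*(x^A1+1)"
  unfolding GG_def
  by (simp only: mp_diff[OF C] mp_mult[OF C] mp_add[OF C] mp_monom mp_one poly_diff poly_mult poly_add poly_monom poly_1 mult_1)



lemma canon_cong_sub:
  assumes pr: "prime p1" "prime p2" "p1 \<noteq> p2" and le: "c1 \<le> b1" "c2 \<le> b2"
  shows "[canon_elem p1 b1 p2 b2 e1 e2 = canon_elem p1 c1 p2 c2 e1 e2] (mod p1^c1 * p2^c2)"
proof -
  have copb: "coprime (p1^b1) (p2^b2)" using pr by (simp add: primes_coprime)
  have nzb: "p1^b1 \<noteq> 0" "p2^b2 \<noteq> 0" using pr by (auto simp: prime_gt_0_nat)
  have copc: "coprime (p1^c1) (p2^c2)" using pr by (simp add: primes_coprime)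
  have nzc: "p1^c1 \<noteq> 0" "p2^c2 \<noteq> 0" using pr by (auto simp: prime_gt_0_nat)
  note B = canon_elem_props[OF copb nzb, of e1 e2]
  note Cc = canon_elem_props[OF copc nzc, of e1 e2]
  have d1: "p1^c1 dvd p1^b1" using le by (simp add: le_imp_power_dvd)
  have d2: "p2^c2 dvd p2^b2" using le by (simp add: le_imp_power_dvd)
  have "[canon_elem p1 b1 p2 b2 e1 e2 = e1] (mod p1^c1)" using B d1 cong_dvd_modulus_nat by blast
  then have x1: "[canon_elem p1 b1 p2 b2 e1 e2 = canon_elem p1 c1 p2 c2 e1 e2] (mod p1^c1)"
    using Cc by (meson cong_sym cong_trans)
  have "[canon_elem p1 b1 p2 b2 e1 e2 = e2] (mod p2^c2)" using B d2 cong_dvd_modulus_nat by blast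
  then have x2: "[canon_elem p1 b1 p2 b2 e1 e2 = canon_elem p1 c1 p2 c2 e1 e2] (mod p2^c2)"
    using Cc by (meson cong_sym cong_trans)
  show ?thesis using x1 x2 copc by (simp add: coprime_cong_mult_nat)
qed

theorem theorem4:
  fixes \<gamma> :: "'a::{field,finite}" and \<delta> :: "'b::{field,finite}"
    and p1 p2 b1 b2 i1 i2 j1 j2 :: nat and \<sigma>1 \<sigma>2 :: int
  assumes "prime p1" "prime p2" "p1 > 2" "p2 > 2" "p1 \<noteq> p2"
    and "b1 \<ge> 1" "b2 \<ge> 1"
    and "CARD('a) = 2 ^ ord (p1 ^ b1 * p2 ^ b2) 2"
    and "primitive_root_of_unity \<gamma> (p1 ^ b1 * p2 ^ b2)"
    and "good \<gamma> p1 b1 p2 b2"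
    and "coprime \<sigma>1 (int (p1 ^ b1 * p2 ^ b2))" "coprime \<sigma>2 (int (p1 ^ b1 * p2 ^ b2))"
    and "collision \<gamma> p1 b1 p2 b2 (int (p1 ^ i1 * p2 ^ i2) * \<sigma>1) (int (p1 ^ j1 * p2 ^ j2) * \<sigma>2)"
    and "CARD('b) = 2 ^ ord (p1 ^ (b1 - min i1 j1) * p2 ^ (b2 - min i2 j2)) 2"
    and "primitive_root_of_unity \<delta> (p1 ^ (b1 - min i1 j1) * p2 ^ (b2 - min i2 j2))"
  shows "good \<delta> p1 (b1 - min i1 j1) p2 (b2 - min i2 j2)"
proof -
  note pr = assms(1,2,5)
  have Ca: "(1::'a) + 1 = 0" using char2_of_card[OF assms(8)] .
  have Cb: "(1::'b) + 1 = 0" using char2_of_card[OF assms(14)] .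
  define w1 where "w1 = min i1 j1"
  define w2 where "w2 = min i2 j2"
  define c1 where "c1 = b1 - w1"
  define c2 where "c2 = b2 - w2"
  define m2 where "m2 = p1^b1 * p2^b2"
  define m1 where "m1 = p1^c1 * p2^c2"
  define d where "d = p1^w1 * p2^w2"
  define u where "u = int (p1 ^ i1 * p2 ^ i2) * \<sigma>1"
  define v where "v = int (p1 ^ j1 * p2 ^ j2) * \<sigma>2"
  define s10' where "s10' = canon_elem p1 b1 p2 b2 1 0"
  define s01' where "s01' = canon_elem p1 b1 p2 b2 0 1"
  define s10 where "s10 = canon_elem p1 c1 p2 c2 1 0"
  define s01 where "s01 = canon_elem p1 c1 p2 c2 0 1"
  have col: "u \<in> E_set p1 b1 p2 b2" "v \<in> E_set p1 b1 p2 b2"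
    "rho (\<gamma> powi (int s10' * u)) (\<gamma> powi (int s01' * u)) = rho (\<gamma> powi (int s10' * v)) (\<gamma> powi (int s01' * v))"
    "\<not> [u = v] (mod int m2)"
    using assms(13) unfolding collision_def Let_def u_def v_def s10'_def s01'_def m2_def by auto
  have uE: "\<not> int (p1^b1) dvd u" "\<not> int (p2^b2) dvd u" using col(1) unfolding E_set_def by auto
  have vE: "\<not> int (p1^b1) dvd v" "\<not> int (p2^b2) dvd v" using col(2) unfolding E_set_def by auto
  have lt: "i1 < b1" "i2 < b2" "j1 < b1" "j2 < b2"
  proof -
    have gen: "x < bb" if "\<not> int (p^bb) dvd int (p^x * r) * s" for p x bb r and s :: int
    proof (rule ccontr)
      assume "\<not> x < bb"
      then have "p^bb dvd p^x * r" by (simp add: le_imp_power_dvd)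
      then have "int (p^bb) dvd int (p^x * r) * s" by (metis dvd_mult2 of_nat_dvd_iff)
      with that show False by simp
    qed
    show "i1 < b1" using uE(1) unfolding u_def by (rule gen)
    show "i2 < b2" using uE(2) unfolding u_def by (intro gen[of p2 _ _ "p1^i1"]) (simp add: mult.commute)
    show "j1 < b1" using vE(1) unfolding v_def by (rule gen)
    show "j2 < b2" using vE(2) unfolding v_def by (intro gen[of p2 _ _ "p1^j1"]) (simp add: mult.commute)
  qed
  have wle: "w1 \<le> i1" "w1 \<le> j1" "w2 \<le> i2" "w2 \<le> j2" unfolding w1_def w2_def by auto
  have c1: "c1 \<ge> 1" "c2 \<ge> 1" using lt wle unfolding c1_def c2_def by auto
  have pb1: "p1^b1 = p1^w1 * p1^c1" using lt wle unfolding c1_def by (simp add: power_add[symmetric])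
  have pb2: "p2^b2 = p2^w2 * p2^c2" using lt wle unfolding c2_def by (simp add: power_add[symmetric])
  have m2d: "m2 = d * m1" unfolding m2_def d_def m1_def pb1 pb2 by (simp add: mult_ac)
  define u0 where "u0 = int (p1^(i1-w1) * p2^(i2-w2)) * \<sigma>1"
  define v0 where "v0 = int (p1^(j1-w1) * p2^(j2-w2)) * \<sigma>2"
  have uu: "u = int d * u0"
  proof -
    have "p1^i1 = p1^w1 * p1^(i1-w1)" "p2^i2 = p2^w2 * p2^(i2-w2)" using wle by (simp_all add: power_add[symmetric])
    then show ?thesis unfolding u_def u0_def d_def by (simp add: mult_ac)
  qed
  have vv: "v = int d * v0"
  proof -
    have "p1^j1 = p1^w1 * p1^(j1-w1)" "p2^j2 = p2^w2 * p2^(j2-w2)" using wle by (simp_all add: power_add[symmetric])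
    then show ?thesis unfolding v_def v0_def d_def by (simp add: mult_ac)
  qed
  have m1pos: "0 < m1" unfolding m1_def using pr by (simp add: prime_gt_0_nat)
  have dpos: "0 < d" unfolding d_def using pr by (simp add: prime_gt_0_nat)
  define eta where "eta = \<gamma> ^ d"
  have primg: "primitive_root_of_unity \<gamma> m2" using assms(9) unfolding m2_def .
  have prime_eta: "primitive_root_of_unity eta m1"
    unfolding primitive_root_of_unity_def
  proof (intro conjI allI impI)
    show "0 < m1" by (rule m1pos)
    show "eta ^ m1 = 1" unfolding eta_def power_mult[symmetric] m2d[symmetric]
      using primg by (simp add: primitive_root_of_unity_def)
    fix k assume k: "0 < k \<and> k < m1"
    have "0 < d * k" "d * k < m2" using k dpos unfolding m2d by auto
    then show "eta ^ k \<noteq> 1" unfolding eta_def power_mult[symmetric]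
      using primg by (simp add: primitive_root_of_unity_def)
  qed
  have g1: "\<gamma> ^ m2 = 1" "0 < m2" using primg by (simp_all add: primitive_root_of_unity_def)
  define a where "a = nat (u0 mod int m1)"
  define b where "b = nat (v0 mod int m1)"
  have acong: "[int a = u0] (mod int m1)" unfolding a_def using m1pos by (simp add: cong_def)
  have bcong: "[int b = v0] (mod int m1)" unfolding b_def using m1pos by (simp add: cong_def)
  have le: "c1 \<le> b1" "c2 \<le> b2" unfolding c1_def c2_def by auto
  have s10c: "[int s10' = int s10] (mod int m1)" unfolding s10'_def s10_def m1_def cong_int_iff
    by (rule canon_cong_sub[OF pr le])
  have s01c: "[int s01' = int s01] (mod int m1)" unfolding s01'_def s01_def m1_def cong_int_iff
    by (rule canon_cong_sub[OF pr le])
  have conv: "\<gamma> powi (int s' * uu) = eta ^ (s * aa)"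
    if "[int s' = int s] (mod int m1)" "[int aa = uu0] (mod int m1)" "uu = int d * uu0" for s' s aa uu uu0
  proof -
    have "[int s' * uu = int (d * (s * aa))] (mod int m2)" unfolding m2d by (rule expo_cong[OF that])
    then have "\<gamma> powi (int s' * uu) = \<gamma> powi int (d * (s * aa))" by (rule powi_cong[OF g1])
    also have "\<dots> = \<gamma> ^ (d * (s * aa))" by (rule power_int_of_nat)
    also have "\<dots> = eta ^ (s * aa)" unfolding eta_def by (simp only: power_mult)
    finally show ?thesis .
  qed
  define X1 where "X1 = eta ^ (s10 * a)"
  define Y1 where "Y1 = eta ^ (s01 * a)"
  define X2 where "X2 = eta ^ (s10 * b)"
  define Y2 where "Y2 = eta ^ (s01 * b)"
  have rhoeq: "rho X1 Y1 = rho X2 Y2"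
    using col(3) unfolding X1_def Y1_def X2_def Y2_def
      conv[OF s10c acong uu] conv[OF s01c acong uu] conv[OF s10c bcong vv] conv[OF s01c bcong vv] .
  have q1m: "p1^c1 dvd m1" "p2^c2 dvd m1" unfolding m1_def by simp_all
  have d1: "p1^w1 dvd d" "p2^w2 dvd d" unfolding d_def by simp_all
  have na: "\<not> p1^c1 dvd a" "\<not> p2^c2 dvd a" "\<not> p1^c1 dvd b" "\<not> p2^c2 dvd b"
    using na_lemma[OF uE(1) uu d1(1) pb1 q1m(1) acong] na_lemma[OF uE(2) uu d1(2) pb2 q1m(2) acong]
      na_lemma[OF vE(1) vv d1(1) pb1 q1m(1) bcong] na_lemma[OF vE(2) vv d1(2) pb2 q1m(2) bcong] by auto
  have ab: "\<not> [a = b] (mod m1)"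
  proof
    assume "[a = b] (mod m1)"
    then have "[int a = int b] (mod int m1)" by (simp add: cong_int_iff)
    then have "[u0 = v0] (mod int m1)" using acong bcong by (meson cong_sym cong_trans)
    then have "int m1 dvd (u0 - v0)" by (simp add: cong_iff_dvd_diff)
    then have "int d * int m1 dvd int d * (u0 - v0)" by (rule mult_dvd_mono[OF dvd_refl])
    then have "int m2 dvd (u - v)" unfolding uu vv m2d by (simp add: algebra_simps)
    then have "[u = v] (mod int m2)" by (simp add: cong_iff_dvd_diff)
    with col(4) show False by simp
  qed
  have primeta': "primitive_root_of_unity eta (p1^c1 * p2^c2)" using prime_eta unfolding m1_def .
  have etanz: "eta \<noteq> 0" using prim_nz[OF prime_eta] .
  have ne1: "X1 \<noteq> 1" "X2 \<noteq> 1" unfolding X1_def X2_def s10_def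
    using pow_ne1_10[OF pr primeta'] na by auto
  have polyeq: "X1*(Y1+1)*Y2*(X2+1) = X2*(Y2+1)*Y1*(X1+1)"
    by (rule rho_eq_poly[OF Ca _ _ _ _ ne1 rhoeq]) (simp_all add: X1_def Y1_def X2_def Y2_def etanz)
  have evG: "poly (map_poly (hb :: bit \<Rightarrow> 'a) (GG (s10*a) (s01*a) (s10*b) (s01*b))) eta = 0"
    unfolding ev_GG[OF Ca] using polyeq unfolding X1_def Y1_def X2_def Y2_def by simp
  have primd: "primitive_root_of_unity \<delta> m1" using assms(15) unfolding m1_def c1_def c2_def w1_def w2_def .
  obtain j where j: "coprime j m1" "poly (map_poly (hb :: bit \<Rightarrow> 'b) (GG (s10*a) (s01*a) (s10*b) (s01*b))) (\<delta> ^ j) = 0"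
    using transfer[OF Ca Cb prime_eta primd evG] by blast
  have ex: "(\<delta>^j)^(s*n) = \<delta>^(s*(j*n))" for s n by (simp add: power_mult[symmetric] mult_ac)
  have eqd: "\<delta>^(s10*(j*a)) * (\<delta>^(s01*(j*a)) + 1) * \<delta>^(s01*(j*b)) * (\<delta>^(s10*(j*b)) + 1) =
             \<delta>^(s10*(j*b)) * (\<delta>^(s01*(j*b)) + 1) * \<delta>^(s01*(j*a)) * (\<delta>^(s10*(j*a)) + 1)"
    using j(2) unfolding ev_GG[OF Cb] ex by simp
  have cjm: "coprime j (p1^c1) \<and> coprime j (p2^c2)" using j(1) unfolding m1_def by (simp only: coprime_mult_right_iff)
  have cjq: "coprime (p1^c1) j" "coprime (p2^c2) j" using cjm coprime_commute[THEN iffD1] by blast+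
  have na': "\<not> p1^c1 dvd j*a" "\<not> p2^c2 dvd j*a" "\<not> p1^c1 dvd j*b" "\<not> p2^c2 dvd j*b"
    using na coprime_dvd_mult_right_iff[OF cjq(1)] coprime_dvd_mult_right_iff[OF cjq(2)] by simp_all
  have ab': "\<not> [j*a = j*b] (mod p1^c1 * p2^c2)"
    using ab j(1) unfolding m1_def by (simp add: cong_mult_lcancel_nat)
  have "good \<delta> p1 c1 p2 c2"
    by (rule core_good[OF Cb pr c1 primd[unfolded m1_def] na' ab']) (use eqd in \<open>simp add: s10_def s01_def\<close>)
  then show ?thesis unfolding c1_def c2_def w1_def w2_def .
qed


end
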